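(* Let $0<A<1$, $\lambda_0=A-1$, $L>0$, $\sigma=2\pi/L$ and $c_0\ge2\sqrt{-\lambda_0}$. If $\mu_{max}>0$ is small enough, there exists $\kappa>0$ such that for all $(n,j)\in\mathbb{Z}\times\mathbb{N}$ and $0\le\mu<\mu_{max}$, $$|\operatorname{Re}a^\pm_{n,j,\mu}|\ge2\kappa,\quad |\operatorname{Re}b^-_{n,j,\mu}|\ge2\kappa,\quad\text{and}\quad |\operatorname{Re}b^+_{n,j,\mu}|\ge2\kappa\ \text{ whenever }\operatorname{Re}b^+_{n,j,\mu}<0.$$ Also, there exist $C_\kappa,\overline N,\overline J\ge0$ such that if $|n|\ge\overline N$ or $j\ge\overline J$, then for all $0\le\mu<\mu_{max}$, $$0<\frac{1}{|\operatorname{Re}a^\pm_{n,j,\mu}|-\kappa},\ \frac{1}{|\operatorname{Re}b^\pm_{n,j,\mu}|-\kappa}\le\frac{C_\kappa}{\sqrt{1+\mu n^2+j+|n|}}.$$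
   Context: $\lambda_j=-1+(2j+1)A$. With $\delta_{0j}$ the Kronecker symbol, $a^\pm_{n,j,\mu}=\frac12\Big(-2in\sigma-c_0\pm\sqrt{4\mu n^2\sigma^2+c_0^2+4in\sigma c_0+4[(1-\delta_{0j})\lambda_j-\lambda_0]}\Big)$ and $b^\pm_{n,j,\mu}=\frac12\Big(-2in\sigma-c_0\pm\sqrt{4\mu n^2\sigma^2+c_0^2+4in\sigma c_0+4\lambda_j}\Big)$, where for $z=re^{i\vartheta}$ with $r\ge0$, $\vartheta\in(-\pi,\pi]$, $\sqrt z:=\sqrt r e^{i\vartheta/2}$. *)

theory Defs
  imports "HOL-Analysis.Analysis"
begin

definition psqrt :: "complex \<Rightarrow> complex" where
  "psqrt z = complex_of_real (sqrt (cmod z)) * exp (\<i> * complex_of_real (Arg z / 2))"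

definition lam :: "real \<Rightarrow> nat \<Rightarrow> real" where
  "lam A j = -1 + (2 * real j + 1) * A"

definition kdelta :: "nat \<Rightarrow> real" where
  "kdelta j = (if j = 0 then 1 else 0)"

text \<open>sigma = 2 pi / L. The sign s \<in> {1,-1} selects the superscript +/-.\<close>
definition acoef :: "real \<Rightarrow> real \<Rightarrow> real \<Rightarrow> real \<Rightarrow> int \<Rightarrow> nat \<Rightarrow> real \<Rightarrow> complex" where
  "acoef A L c0 s n j \<mu> = (let \<sigma> = 2 * pi / L in
     (1/2) * (- 2 * \<i> * of_int n * \<sigma> - c0 + s * psqrt (4 * \<mu> * of_int n ^ 2 * \<sigma> ^ 2 + c0 ^ 2
        + 4 * \<i> * of_int n * \<sigma> * c0 + 4 * ((1 - kdelta j) * lam A j - lam A 0))))"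

definition bcoef :: "real \<Rightarrow> real \<Rightarrow> real \<Rightarrow> real \<Rightarrow> int \<Rightarrow> nat \<Rightarrow> real \<Rightarrow> complex" where
  "bcoef A L c0 s n j \<mu> = (let \<sigma> = 2 * pi / L in
     (1/2) * (- 2 * \<i> * of_int n * \<sigma> - c0 + s * psqrt (4 * \<mu> * of_int n ^ 2 * \<sigma> ^ 2 + c0 ^ 2
        + 4 * \<i> * of_int n * \<sigma> * c0 + 4 * lam A j)))"

end

theory Submission imports Defs begin

lemma psqrt_csqrt: "psqrt z = csqrt z"
proof (cases "z = 0")
  case True then show ?thesis by (simp add: psqrt_def)
next
  case False
  have L: "Ln z = complex_of_real (ln (cmod z)) + \<i> * complex_of_real (Arg z)"
    using False by (simp add: complex_eq_iff Arg_eq_Im_Ln)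
  have "csqrt z = exp (Ln z / 2)" using False by (simp add: csqrt_exp_Ln)
  also have "\<dots> = exp (complex_of_real (ln (cmod z) / 2)) * exp (\<i> * complex_of_real (Arg z / 2))"
    by (simp add: L exp_add[symmetric] add_divide_distrib)
  also have "exp (complex_of_real (ln (cmod z) / 2)) = complex_of_real (sqrt (cmod z))"
  proof -
    have "exp (ln (cmod z) / 2) = sqrt (cmod z)" using False
      by (simp add: powr_half_sqrt[symmetric] powr_def)
    then show ?thesis by (metis exp_of_real)
  qed
  finally show ?thesis by (simp add: psqrt_def)
qed
lemma Re_acoef:
  assumes "P = 4 * \<mu> * (of_int n) ^ 2 * (2 * pi / L) ^ 2 + c0 ^ 2 + 4 * ((1 - kdelta j) * lam A j - lam A 0)"
    and "I = 4 * of_int n * (2 * pi / L) * c0"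
  shows "Re (acoef A L c0 s n j \<mu>) = (s * sqrt ((cmod (Complex P I) + P) / 2) - c0) / 2"
proof -
  have e: "4 * \<mu> * of_int n ^ 2 * (2*pi/L) ^ 2 + c0 ^ 2
        + 4 * \<i> * of_int n * (2*pi/L) * c0 + 4 * ((1 - kdelta j) * lam A j - lam A 0) = Complex P I"
    using assms by (simp add: complex_eq_iff)
  show ?thesis unfolding acoef_def Let_def e psqrt_csqrt by simp
qed
lemma Re_bcoef:
  assumes "P = 4 * \<mu> * (of_int n) ^ 2 * (2 * pi / L) ^ 2 + c0 ^ 2 + 4 * lam A j"
    and "I = 4 * of_int n * (2 * pi / L) * c0"
  shows "Re (bcoef A L c0 s n j \<mu>) = (s * sqrt ((cmod (Complex P I) + P) / 2) - c0) / 2"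
proof -
  have e: "4 * \<mu> * of_int n ^ 2 * (2*pi/L) ^ 2 + c0 ^ 2
        + 4 * \<i> * of_int n * (2*pi/L) * c0 + 4 * lam A j = Complex P I"
    using assms by (simp add: complex_eq_iff)
  show ?thesis unfolding bcoef_def Let_def e psqrt_csqrt by simp
qed
lemma finite_min_pos:
  fixes f :: "'a \<Rightarrow> real"
  assumes "finite S" "\<forall>x\<in>S. 0 < f x"
  shows "\<exists>e>0. \<forall>x\<in>S. e \<le> f x"
  using assms
proof (induction S rule: finite_induct)
  case empty then show ?case by (intro exI[of _ 1]) auto
next
  case (insert a F)
  then obtain e where "e > 0" "\<forall>x\<in>F. e \<le> f x" by auto
  then show ?case using insert.prems
    by (intro exI[of _ "min e (f a)"]) auto
qed

lemma R_ge_sqrtP: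
  assumes "0 \<le> P"
  shows "sqrt P \<le> sqrt ((cmod (Complex P I) + P) / 2)"
proof -
  have "P \<le> cmod (Complex P I)" using abs_Re_le_cmod[of "Complex P I"] by simp
  then show ?thesis by simp
qed

lemma R_ge_half:
  assumes "0 \<le> P"
  shows "sqrt (P + \<bar>I\<bar>) / 2 \<le> sqrt ((cmod (Complex P I) + P) / 2)"
proof -
  have "\<bar>I\<bar> \<le> cmod (Complex P I)" using abs_Im_le_cmod[of "Complex P I"] by simp
  then have "(P + \<bar>I\<bar>) / 4 \<le> (cmod (Complex P I) + P) / 2" using assms by simp
  then have "sqrt ((P + \<bar>I\<bar>) / 4) \<le> sqrt ((cmod (Complex P I) + P) / 2)" by simp
  moreover have "sqrt ((P + \<bar>I\<bar>) / 4) = sqrt (P + \<bar>I\<bar>) / 2"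
    by (simp add: real_sqrt_divide)
  ultimately show ?thesis by simp
qed

lemma bplus:
  fixes c0 P I t \<mu> lm :: real
  assumes c0: "c0 > 0" and P0: "0 \<le> P" and I: "I = 4 * t * c0"
    and P: "P = 4 * \<mu> * t ^ 2 + c0 ^ 2 + 4 * lm"
    and lt: "sqrt ((cmod (Complex P I) + P) / 2) < c0"
  shows "0 < - ((1 + \<mu>) * t ^ 2 + lm)"
    and "c0 - sqrt ((cmod (Complex P I) + P) / 2)
           \<ge> 4 * c0 * (- ((1 + \<mu>) * t ^ 2 + lm)) / (2 * c0 ^ 2 + P + \<bar>I\<bar>)"
proof -
  define Q where "Q = cmod (Complex P I)"
  define R where "R = sqrt ((Q + P) / 2)"
  define E where "E = - ((1 + \<mu>) * t ^ 2 + lm)"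
  have Q2: "Q ^ 2 = P ^ 2 + I ^ 2" unfolding Q_def by (simp add: cmod_def)
  have QP: "P \<le> Q" unfolding Q_def using abs_Re_le_cmod[of "Complex P I"] by simp
  have QI: "\<bar>I\<bar> \<le> Q" unfolding Q_def using abs_Im_le_cmod[of "Complex P I"] by simp
  have QPI: "Q \<le> P + \<bar>I\<bar>"
  proof -
    have "P^2 + I^2 \<le> (P + \<bar>I\<bar>)^2" using P0 by (simp add: power2_eq_square algebra_simps)
    then have "sqrt (P^2 + I^2) \<le> sqrt ((P + \<bar>I\<bar>)^2)" by (rule real_sqrt_le_mono)
    then show ?thesis using P0 by (simp add: Q_def cmod_def)
  qed
  have R0: "0 \<le> R" unfolding R_def using QP P0 by simp
  have R2: "R ^ 2 = (Q + P) / 2" unfolding R_def using QP P0 by simp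
  have Rlt: "R < c0" using lt unfolding R_def Q_def .
  have "R ^ 2 < c0 ^ 2" using Rlt R0 by (simp add: power_strict_mono)
  then have pos: "0 < 2 * c0 ^ 2 - P - Q" using R2 by simp
  have id: "(2 * c0 ^ 2 - P - Q) * (2 * c0 ^ 2 - P + Q) = 16 * c0 ^ 2 * E"
  proof -
    have "(2 * c0 ^ 2 - P - Q) * (2 * c0 ^ 2 - P + Q) = (2 * c0 ^ 2 - P) ^ 2 - Q ^ 2"
      by (simp add: algebra_simps power2_eq_square)
    also have "\<dots> = (2 * c0 ^ 2 - P) ^ 2 - P ^ 2 - I ^ 2" using Q2 by simp
    also have "\<dots> = 16 * c0 ^ 2 * E" unfolding E_def P I
      by (simp add: algebra_simps power2_eq_square)
    finally show ?thesis .
  qed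
  have d0: "2 * c0 ^ 2 \<le> 2 * c0 ^ 2 - P + Q" using QP by simp
  have dpos: "0 < 2 * c0 ^ 2 - P + Q" using d0 c0 by (smt (verit) zero_less_power)
  have "0 < 16 * c0 ^ 2 * E" using id pos dpos by (metis mult_pos_pos)
  then show "0 < - ((1 + \<mu>) * t ^ 2 + lm)" using c0 unfolding E_def
    by (simp add: zero_less_mult_iff)
  then have E0: "0 < E" unfolding E_def .
  have dle: "2 * c0 ^ 2 - P + Q \<le> 2 * c0 ^ 2 + P + \<bar>I\<bar>" using QPI P0 by simp
  have eq: "2 * c0 ^ 2 - P - Q = 16 * c0 ^ 2 * E / (2 * c0 ^ 2 - P + Q)"
    using id dpos by (simp add: field_simps)
  have "16 * c0 ^ 2 * E / (2 * c0 ^ 2 + P + \<bar>I\<bar>) \<le> 16 * c0 ^ 2 * E / (2 * c0 ^ 2 - P + Q)"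
    using dle dpos E0 c0 by (intro divide_left_mono) auto
  then have A1: "2 * c0 ^ 2 - P - Q \<ge> 16 * c0 ^ 2 * E / (2 * c0 ^ 2 + P + \<bar>I\<bar>)" using eq by simp
  have c2: "c0 ^ 2 - R ^ 2 = (2 * c0 ^ 2 - P - Q) / 2" using R2 by simp
  have "c0 - R = (c0 ^ 2 - R ^ 2) / (c0 + R)" using R0 c0
    by (simp add: field_simps power2_eq_square)
  also have "\<dots> \<ge> (c0 ^ 2 - R ^ 2) / (2 * c0)"
    using R0 c0 Rlt pos c2 by (intro divide_left_mono) auto
  finally have A2: "c0 - R \<ge> (2 * c0 ^ 2 - P - Q) / (4 * c0)" using c2 by simp
  have "(2 * c0 ^ 2 - P - Q) / (4 * c0) \<ge> 16 * c0 ^ 2 * E / (2 * c0 ^ 2 + P + \<bar>I\<bar>) / (4 * c0)"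
    using A1 c0 by (intro divide_right_mono) auto
  also have "16 * c0 ^ 2 * E / (2 * c0 ^ 2 + P + \<bar>I\<bar>) / (4 * c0) = 4 * c0 * E / (2 * c0 ^ 2 + P + \<bar>I\<bar>)"
  proof -
    have Dp: "0 < 2 * c0 ^ 2 + P + \<bar>I\<bar>" using c0 P0 by (smt (verit) zero_less_power)
    have "\<And>D. D > 0 \<Longrightarrow> 16 * c0 ^ 2 * E / D / (4 * c0) = 4 * c0 * E / D"
      using c0 by (simp add: field_simps power2_eq_square)
    then show ?thesis using Dp by blast
  qed
  finally show "c0 - sqrt ((cmod (Complex P I) + P) / 2)
           \<ge> 4 * c0 * (- ((1 + \<mu>) * t ^ 2 + lm)) / (2 * c0 ^ 2 + P + \<bar>I\<bar>)"
    using A2 unfolding R_def Q_def E_def by simp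
qed

lemma big:
  fixes s R c0 k \<kappa> S W :: real
  assumes s: "s \<in> {1, -1}" and c0: "c0 > 0" and RW: "R \<ge> W / 2" and W4: "W \<ge> 4 * c0"
    and WS: "W \<ge> sqrt (k * S / 2)" and k: "k > 0" and S: "S > 0" and \<kappa>: "0 < \<kappa>" "\<kappa> \<le> c0 / 4"
  shows "0 < 1 / (\<bar>(s * R - c0) / 2\<bar> - \<kappa>) \<and>
         1 / (\<bar>(s * R - c0) / 2\<bar> - \<kappa>) \<le> (16 / sqrt (k / 2)) / sqrt S"
proof -
  define x where "x = \<bar>(s * R - c0) / 2\<bar>"
  have x8: "x \<ge> W / 8" using s RW W4 c0 unfolding x_def by auto
  have x2: "x \<ge> 2 * \<kappa>" using x8 W4 \<kappa> by simp
  have pos: "0 < x - \<kappa>" using x2 \<kappa> by simp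
  have Wpos: "W > 0" using W4 c0 by simp
  have "1 / (x - \<kappa>) \<le> 1 / (W / 16)"
    using pos x8 x2 Wpos by (intro divide_left_mono) auto
  also have "\<dots> = 16 / W" by simp
  also have "\<dots> \<le> 16 / sqrt (k * S / 2)"
    using WS k S Wpos by (intro divide_left_mono) auto
  also have "sqrt (k * S / 2) = sqrt (k / 2) * sqrt S"
    by (simp add: real_sqrt_mult[symmetric])
  also have "16 / (sqrt (k / 2) * sqrt S) = (16 / sqrt (k / 2)) / sqrt S" by simp
  finally show ?thesis using pos unfolding x_def by simp
qed
theorem mainTheorem6:
  fixes A L c0 :: real
  assumes "0 < A" "A < 1" "0 < L" "c0 \<ge> 2 * sqrt (- lam A 0)"
  shows "\<exists>M>0. \<forall>\<mu>max. 0 < \<mu>max \<and> \<mu>max \<le> M \<longrightarrow>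
    (\<exists>\<kappa>>0.
      (\<forall>(n::int) (j::nat) (\<mu>::real). 0 \<le> \<mu> \<and> \<mu> < \<mu>max \<longrightarrow>
          (\<forall>s\<in>{1, -1::real}. \<bar>Re (acoef A L c0 s n j \<mu>)\<bar> \<ge> 2 * \<kappa>)
        \<and> \<bar>Re (bcoef A L c0 (-1) n j \<mu>)\<bar> \<ge> 2 * \<kappa>
        \<and> (Re (bcoef A L c0 1 n j \<mu>) < 0 \<longrightarrow> \<bar>Re (bcoef A L c0 1 n j \<mu>)\<bar> \<ge> 2 * \<kappa>))
      \<and> (\<exists>C N J :: real. C \<ge> 0 \<and> N \<ge> 0 \<and> J \<ge> 0 \<and>
          (\<forall>(n::int) (j::nat). (real_of_int \<bar>n\<bar> \<ge> N \<or> real j \<ge> J) \<longrightarrow>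
            (\<forall>\<mu>::real. 0 \<le> \<mu> \<and> \<mu> < \<mu>max \<longrightarrow>
              (\<forall>s\<in>{1, -1::real}.
                 0 < 1 / (\<bar>Re (acoef A L c0 s n j \<mu>)\<bar> - \<kappa>)
               \<and> 1 / (\<bar>Re (acoef A L c0 s n j \<mu>)\<bar> - \<kappa>)
                   \<le> C / sqrt (1 + \<mu> * of_int n ^ 2 + real j + of_int \<bar>n\<bar>)
               \<and> 0 < 1 / (\<bar>Re (bcoef A L c0 s n j \<mu>)\<bar> - \<kappa>)
               \<and> 1 / (\<bar>Re (bcoef A L c0 s n j \<mu>)\<bar> - \<kappa>)
                   \<le> C / sqrt (1 + \<mu> * of_int n ^ 2 + real j + of_int \<bar>n\<bar>))))))"
proof -
  note A0 = assms(1) and A1 = assms(2) and L0 = assms(3) and c0a = assms(4)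
  define \<sigma> where "\<sigma> = 2 * pi / L"
  have \<sigma>pos: "\<sigma> > 0" unfolding \<sigma>_def using L0 by simp
  have l0: "lam A 0 = A - 1" by (simp add: lam_def)
  have lamj: "lam A j = A - 1 + 2 * A * real j" for j by (simp add: lam_def algebra_simps)
  have sq: "sqrt (1 - A) > 0" using A1 by simp
  have c0b: "2 * sqrt (1 - A) \<le> c0" using c0a l0 by simp
  have c0pos: "c0 > 0" using c0b sq by linarith
  have c0sq: "c0 ^ 2 \<ge> 4 * (1 - A)"
  proof -
    have "(2 * sqrt (1 - A)) ^ 2 \<le> c0 ^ 2" using c0b sq by (intro power_mono) auto
    then show ?thesis using A1 by (simp add: power_mult_distrib)
  qed
  define S where "S = ({(n, j). (of_int n :: real) ^ 2 * \<sigma> ^ 2 + lam A j < 0} :: (int \<times> nat) set)"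
  have finS: "finite S"
  proof -
    define K where "K = \<lceil>1 / \<sigma>\<rceil>"
    define J0 where "J0 = nat \<lceil>1 / A\<rceil>"
    have "S \<subseteq> {-K..K} \<times> {..J0}"
    proof (rule subsetI)
      fix x assume "x \<in> S"
      then obtain n j where xnj: "x = (n, j)" "(n, j) \<in> S" by (cases x) auto
      then have h: "(of_int n :: real) ^ 2 * \<sigma> ^ 2 + lam A j < 0" unfolding S_def by simp
      have "lam A j \<ge> A - 1" using lamj[of j] A0 by simp
      then have "(of_int n * \<sigma>) ^ 2 < 1 ^ 2" using h A0 by (simp add: power_mult_distrib)
      then have "\<bar>of_int n * \<sigma>\<bar> < 1" by (simp add: abs_square_less_1)
      then have "\<bar>of_int n\<bar> < 1 / \<sigma>" using \<sigma>pos by (simp add: abs_mult field_simps)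
      moreover have "1 / \<sigma> \<le> of_int K" unfolding K_def by (rule le_of_int_ceiling)
      ultimately have "real_of_int \<bar>n\<bar> \<le> real_of_int K" by simp
      then have "\<bar>n\<bar> \<le> K" by linarith
      then have nK: "n \<in> {-K..K}" by auto
      have "0 \<le> (of_int n :: real) ^ 2 * \<sigma> ^ 2" by simp
      then have "lam A j < 0" using h by linarith
      then have "real j * A < 1" using lamj[of j] A0 by (simp add: algebra_simps)
      then have "real j < 1 / A" using A0 by (simp add: field_simps)
      then have "j \<le> J0" unfolding J0_def by (simp add: le_nat_iff) linarith
      then show "x \<in> {-K..K} \<times> {..J0}" using nK xnj by simp
    qed
    then show ?thesis by (rule finite_subset) auto
  qed
  obtain e1 where e1: "e1 > 0" "\<forall>x\<in>S. e1 \<le> - ((of_int (fst x) :: real) ^ 2 * \<sigma> ^ 2 + lam A (snd x))"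
    using finite_min_pos[OF finS, of "\<lambda>x. - ((of_int (fst x) :: real) ^ 2 * \<sigma> ^ 2 + lam A (snd x))"]
    unfolding S_def by auto
  define M where "M = min 1 (e1 / (2 * (1 - A)))"
  have M0: "M > 0" unfolding M_def using e1 A1 by simp
  define q0 where "q0 = min (1 - A) (2 * A)"
  have q0: "q0 > 0" unfolding q0_def using A0 A1 by simp
  define \<alpha> where "\<alpha> = (sqrt (c0 ^ 2 + 4 * q0) - c0) / 2"
  have \<alpha>: "\<alpha> > 0"
  proof -
    have "c0 < sqrt (c0 ^ 2 + 4 * q0)" by (rule real_less_rsqrt) (use q0 in simp)
    then show ?thesis unfolding \<alpha>_def by simp
  qed
  define Den where "Den = 3 * c0 ^ 2 + 4 + 4 * c0"
  have Den: "Den > 0" unfolding Den_def using c0pos by (intro add_pos_pos) auto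
  define \<kappa> where "\<kappa> = min (c0 / 4) (min (\<alpha> / 2) (c0 * e1 / (2 * Den)))"
  have \<kappa>0: "\<kappa> > 0" unfolding \<kappa>_def using c0pos \<alpha> e1 Den by simp
  have k1: "\<kappa> \<le> c0 / 4" unfolding \<kappa>_def by simp
  have k2: "\<kappa> \<le> \<alpha> / 2" unfolding \<kappa>_def by simp
  have k3: "\<kappa> \<le> c0 * e1 / (2 * Den)" unfolding \<kappa>_def by simp
  have \<kappa>1: "\<kappa> \<le> c0 / 4" "2 * \<kappa> \<le> \<alpha>" "2 * \<kappa> \<le> c0 * e1 / Den"
    using k1 k2 k3 by auto
  have lamge: "lam A j \<ge> A - 1" for j using lamj[of j] A0 by simp
  have P1: "(\<forall>s\<in>{1, -1::real}. \<bar>Re (acoef A L c0 s n j \<mu>)\<bar> \<ge> 2 * \<kappa>)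
        \<and> \<bar>Re (bcoef A L c0 (-1) n j \<mu>)\<bar> \<ge> 2 * \<kappa>
        \<and> (Re (bcoef A L c0 1 n j \<mu>) < 0 \<longrightarrow> \<bar>Re (bcoef A L c0 1 n j \<mu>)\<bar> \<ge> 2 * \<kappa>)"
    if mu0: "0 \<le> \<mu>" and muM: "\<mu> < M" for n j \<mu>
  proof -
    define Pa where "Pa = 4 * \<mu> * (of_int n) ^ 2 * \<sigma> ^ 2 + c0 ^ 2 + 4 * ((1 - kdelta j) * lam A j - lam A 0)"
    define Pb where "Pb = 4 * \<mu> * (of_int n) ^ 2 * \<sigma> ^ 2 + c0 ^ 2 + 4 * lam A j"
    define I where "I = 4 * of_int n * \<sigma> * c0"
    define Ra where "Ra = sqrt ((cmod (Complex Pa I) + Pa) / 2)"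
    define Rb where "Rb = sqrt ((cmod (Complex Pb I) + Pb) / 2)"
    have ReA: "Re (acoef A L c0 s n j \<mu>) = (s * Ra - c0) / 2" for s
      using Re_acoef[OF Pa_def[unfolded \<sigma>_def] I_def[unfolded \<sigma>_def]] unfolding Ra_def .
    have ReB: "Re (bcoef A L c0 s n j \<mu>) = (s * Rb - c0) / 2" for s
      using Re_bcoef[OF Pb_def[unfolded \<sigma>_def] I_def[unfolded \<sigma>_def]] unfolding Rb_def .
    have mu: "\<mu> * (of_int n) ^ 2 * \<sigma> ^ 2 \<ge> 0" using mu0 by simp
    have qa: "(1 - kdelta j) * lam A j - lam A 0 \<ge> q0"
    proof (cases "j = 0")
      case True then show ?thesis by (simp add: kdelta_def l0 q0_def)
    next
      case False
      then have "real j \<ge> 1" by simp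
      then have "2 * A * real j \<ge> 2 * A" using A0 by simp
      then show ?thesis using False by (simp add: kdelta_def lamj q0_def)
    qed
    have Pa0: "Pa \<ge> c0 ^ 2 + 4 * q0" unfolding Pa_def using mu qa by simp
    have "sqrt (c0 ^ 2 + 4 * q0) \<le> sqrt Pa" using Pa0 by simp
    also have "sqrt Pa \<le> Ra" unfolding Ra_def using Pa0 q0 
      by (intro R_ge_sqrtP) (use q0 in \<open>smt (verit) zero_le_power2\<close>)
    finally have Ra: "Ra \<ge> 2 * \<alpha> + c0" unfolding \<alpha>_def by (simp add: field_simps)
    have Pb0: "Pb \<ge> 0" unfolding Pb_def using mu c0sq lamge[of j] by simp
    have Rb0: "Rb \<ge> 0" unfolding Rb_def using Pb0 abs_Re_le_cmod[of "Complex Pb I"] by simp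
    have partA: "\<forall>s\<in>{1, -1::real}. \<bar>Re (acoef A L c0 s n j \<mu>)\<bar> \<ge> 2 * \<kappa>"
      using Ra \<alpha> \<kappa>1 c0pos unfolding ReA by auto
    have partB: "\<bar>Re (bcoef A L c0 (-1) n j \<mu>)\<bar> \<ge> 2 * \<kappa>"
      using Rb0 \<kappa>1 c0pos unfolding ReB by auto
    have partC: "\<bar>Re (bcoef A L c0 1 n j \<mu>)\<bar> \<ge> 2 * \<kappa>" if neg: "Re (bcoef A L c0 1 n j \<mu>) < 0"
    proof -
      define t where "t = of_int n * \<sigma>"
      have t2: "t ^ 2 = (of_int n) ^ 2 * \<sigma> ^ 2" unfolding t_def by (simp add: power_mult_distrib)
      have lt: "sqrt ((cmod (Complex Pb I) + Pb) / 2) < c0" using neg unfolding ReB Rb_def by simp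
      have PbE: "Pb = 4 * \<mu> * t ^ 2 + c0 ^ 2 + 4 * lam A j" unfolding Pb_def t2 by simp
      have IE: "I = 4 * t * c0" unfolding I_def t_def by simp
      note bp = bplus[OF c0pos Pb0 IE PbE lt]
      define E where "E = - ((1 + \<mu>) * t ^ 2 + lam A j)"
      have E0: "E > 0" using bp(1) unfolding E_def .
      have mt: "\<mu> * t ^ 2 \<ge> 0" using mu0 by simp
      have inS: "(n, j) \<in> S" unfolding S_def using E0 mt t2 unfolding E_def by (simp add: algebra_simps)
      have e1le: "e1 \<le> - (t ^ 2 + lam A j)" using e1(2) inS t2 by auto
      have t1A: "t ^ 2 < 1 - A" using E0 mt lamge[of j] unfolding E_def by (simp add: algebra_simps)
      have lneg: "lam A j < 0"
      proof -
        have "(1 + \<mu>) * t ^ 2 = t ^ 2 + \<mu> * t ^ 2" by (simp add: algebra_simps)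
        moreover have "0 \<le> t ^ 2" by simp
        ultimately show ?thesis using E0 mt unfolding E_def by linarith
      qed
      have "\<mu> * t ^ 2 \<le> M * (1 - A)" using muM t1A mu0 by (intro mult_mono) auto
      also have "M * (1 - A) \<le> e1 / 2"
      proof -
        have "M \<le> e1 / (2 * (1 - A))" unfolding M_def by simp
        then have "M * (1 - A) \<le> e1 / (2 * (1 - A)) * (1 - A)" using A1 by (intro mult_right_mono) auto
        also have "\<dots> = e1 / 2" using A1 by (simp add: field_simps)
        finally show ?thesis .
      qed
      finally have "\<mu> * t ^ 2 \<le> e1 / 2" .
      then have Ee: "E \<ge> e1 / 2" using e1le unfolding E_def by (simp add: algebra_simps)
      have t1: "t ^ 2 < 1" using t1A A0 by simp
      then have at1: "\<bar>t\<bar> < 1" by (simp add: abs_square_less_1)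
      have M1: "M \<le> 1" unfolding M_def by simp
      have "\<mu> * t ^ 2 \<le> 1 * 1" using muM M1 t1 mu0 by (intro mult_mono) auto
      then have "Pb \<le> 4 + c0 ^ 2" using lneg unfolding PbE by simp
      moreover have "\<bar>I\<bar> \<le> 4 * c0" unfolding IE using at1 c0pos by (simp add: abs_mult)
      ultimately have Dl: "2 * c0 ^ 2 + Pb + \<bar>I\<bar> \<le> Den" unfolding Den_def by simp
      have Dp: "0 < 2 * c0 ^ 2 + Pb + \<bar>I\<bar>" using c0pos Pb0 by (simp add: add_pos_nonneg)
      have "4 * c0 * (e1 / 2) / Den \<le> 4 * c0 * E / Den"
        using Ee c0pos Den by (intro divide_right_mono mult_left_mono) auto
      also have "\<dots> \<le> 4 * c0 * E / (2 * c0 ^ 2 + Pb + \<bar>I\<bar>)"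
        using Dl Dp c0pos E0 by (intro divide_left_mono) auto
      also have "\<dots> \<le> c0 - Rb" using bp(2) unfolding E_def Rb_def .
      finally have X1: "4 * c0 * (e1 / 2) / Den \<le> c0 - Rb" .
      have X2: "4 * c0 * (e1 / 2) / Den = 2 * (c0 * e1 / Den)" by simp
      have X3: "2 * (c0 * e1 / Den) \<le> c0 - Rb" using X1 unfolding X2 .
      have X4: "\<And>z::real. 2 * z \<le> c0 - Rb \<Longrightarrow> z \<le> (c0 - Rb) / 2" by simp
      have "c0 * e1 / Den \<le> (c0 - Rb) / 2" using X4[OF X3] .
      then have Y: "2 * \<kappa> \<le> (c0 - Rb) / 2" using \<kappa>1(3) by linarith
      have "Rb < c0" using lt unfolding Rb_def .
      then have "\<bar>(1 * Rb - c0) / 2\<bar> = (c0 - Rb) / 2" by simp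
      then show ?thesis using Y unfolding ReB by simp
    qed
    show ?thesis using partA partB partC by blast
  qed
  define k where "k = min (4 * \<sigma> ^ 2) (min (8 * A) (4 * \<sigma> * c0))"
  have k0: "k > 0" unfolding k_def using \<sigma>pos A0 c0pos by simp
  have kle: "k \<le> 4 * \<sigma> ^ 2" "k \<le> 8 * A" "k \<le> 4 * \<sigma> * c0" unfolding k_def by auto
  define NN where "NN = 16 * c0 ^ 2 / k + 1"
  have NN1: "NN \<ge> 1" unfolding NN_def using k0 by simp
  have kNN: "k * NN \<ge> 16 * c0 ^ 2" unfolding NN_def using k0 by (simp add: field_simps)
  define C where "C = 16 / sqrt (k / 2)"
  have P2: "\<forall>s\<in>{1, -1::real}.
                 0 < 1 / (\<bar>Re (acoef A L c0 s n j \<mu>)\<bar> - \<kappa>)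
               \<and> 1 / (\<bar>Re (acoef A L c0 s n j \<mu>)\<bar> - \<kappa>)
                   \<le> C / sqrt (1 + \<mu> * of_int n ^ 2 + real j + of_int \<bar>n\<bar>)
               \<and> 0 < 1 / (\<bar>Re (bcoef A L c0 s n j \<mu>)\<bar> - \<kappa>)
               \<and> 1 / (\<bar>Re (bcoef A L c0 s n j \<mu>)\<bar> - \<kappa>)
                   \<le> C / sqrt (1 + \<mu> * of_int n ^ 2 + real j + of_int \<bar>n\<bar>)"
    if nj: "real_of_int \<bar>n\<bar> \<ge> NN \<or> real j \<ge> NN" and mu0: "0 \<le> \<mu>" for n j \<mu>
  proof
    fix s :: real assume s: "s \<in> {1, -1}"
    define SS where "SS = 1 + \<mu> * of_int n ^ 2 + real j + of_int \<bar>n\<bar>"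
    define Pa where "Pa = 4 * \<mu> * (of_int n) ^ 2 * \<sigma> ^ 2 + c0 ^ 2 + 4 * ((1 - kdelta j) * lam A j - lam A 0)"
    define Pb where "Pb = 4 * \<mu> * (of_int n) ^ 2 * \<sigma> ^ 2 + c0 ^ 2 + 4 * lam A j"
    define I where "I = 4 * of_int n * \<sigma> * c0"
    define Ra where "Ra = sqrt ((cmod (Complex Pa I) + Pa) / 2)"
    define Rb where "Rb = sqrt ((cmod (Complex Pb I) + Pb) / 2)"
    have ReA: "Re (acoef A L c0 s n j \<mu>) = (s * Ra - c0) / 2"
      using Re_acoef[OF Pa_def[unfolded \<sigma>_def] I_def[unfolded \<sigma>_def]] unfolding Ra_def .
    have ReB: "Re (bcoef A L c0 s n j \<mu>) = (s * Rb - c0) / 2"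
      using Re_bcoef[OF Pb_def[unfolded \<sigma>_def] I_def[unfolded \<sigma>_def]] unfolding Rb_def .
    have mn: "\<mu> * (of_int n) ^ 2 \<ge> 0" using mu0 by simp
    have absI: "\<bar>I\<bar> = 4 * \<sigma> * c0 * of_int \<bar>n\<bar>" unfolding I_def using \<sigma>pos c0pos
      by (simp add: abs_mult)
    have base: "4 * \<sigma> ^ 2 * (\<mu> * (of_int n) ^ 2) + 8 * A * real j + 4 * \<sigma> * c0 * of_int \<bar>n\<bar>
        \<ge> k * (SS - 1)"
    proof -
      have "k * (\<mu> * (of_int n) ^ 2) \<le> 4 * \<sigma> ^ 2 * (\<mu> * (of_int n) ^ 2)"
        using kle(1) mn by (rule mult_right_mono)
      moreover have "k * real j \<le> 8 * A * real j" using kle(2) by (rule mult_right_mono) simp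
      moreover have "k * of_int \<bar>n\<bar> \<le> 4 * \<sigma> * c0 * of_int \<bar>n\<bar>" using kle(3) by (rule mult_right_mono) simp
      ultimately show ?thesis unfolding SS_def by (simp add: algebra_simps)
    qed
    have Pa_ge: "Pa \<ge> 4 * \<sigma> ^ 2 * (\<mu> * (of_int n) ^ 2) + 8 * A * real j"
    proof (cases "j = 0")
      case True
      show ?thesis unfolding Pa_def using True
        apply (simp add: kdelta_def l0 algebra_simps)
        using A1 zero_le_power2[of c0] by linarith
    next
      case False then show ?thesis unfolding Pa_def by (simp add: kdelta_def lamj l0 algebra_simps)
    qed
    have Pb_ge: "Pb \<ge> 4 * \<sigma> ^ 2 * (\<mu> * (of_int n) ^ 2) + 8 * A * real j"
      unfolding Pb_def lamj using c0sq by (simp add: algebra_simps)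
    have nn: "0 \<le> \<mu> * (of_int n) ^ 2" "0 \<le> real j" "0 \<le> real_of_int \<bar>n\<bar>" using mn by auto
    have SSN: "SS - 1 \<ge> NN" using nj nn unfolding SS_def by linarith
    have SS2: "SS - 1 \<ge> SS / 2" using SSN NN1 by simp
    have SSp: "SS > 0" using SSN NN1 by simp
    have "k * NN \<le> k * (SS - 1)" using SSN k0 by (intro mult_left_mono) auto
    then have kSS: "k * (SS - 1) \<ge> 16 * c0 ^ 2" using kNN by linarith
    have "k * (SS / 2) \<le> k * (SS - 1)" using SS2 k0 by (intro mult_left_mono) auto
    then have kSS2: "k * (SS - 1) \<ge> k * SS / 2" by simp
    have gen: "0 < 1 / (\<bar>(s * R - c0) / 2\<bar> - \<kappa>) \<and>
         1 / (\<bar>(s * R - c0) / 2\<bar> - \<kappa>) \<le> C / sqrt SS"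
      if P0: "P \<ge> 4 * \<sigma> ^ 2 * (\<mu> * (of_int n) ^ 2) + 8 * A * real j"
        and R: "R = sqrt ((cmod (Complex P I) + P) / 2)" for P R
    proof -
      have Pn: "P \<ge> 0" using P0 nn A0 \<sigma>pos by (smt (verit) mult_nonneg_nonneg zero_le_power2)
      have PI: "P + \<bar>I\<bar> \<ge> k * (SS - 1)" using P0 base absI by linarith
      define W where "W = sqrt (P + \<bar>I\<bar>)"
      have RW: "R \<ge> W / 2" unfolding R W_def using R_ge_half[OF Pn] .
      have "sqrt ((4 * c0) ^ 2) \<le> W" unfolding W_def using PI kSS
        by (intro real_sqrt_le_mono) (simp add: power_mult_distrib)
      moreover have "sqrt ((4 * c0) ^ 2) = 4 * c0" using c0pos by (subst real_sqrt_abs) simp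
      ultimately have W4: "W \<ge> 4 * c0" by linarith
      have WS: "W \<ge> sqrt (k * SS / 2)" unfolding W_def using PI kSS2 by simp
      show ?thesis unfolding C_def
        using big[OF s c0pos RW W4 WS k0 SSp \<kappa>0 \<kappa>1(1)] .
    qed
    show "0 < 1 / (\<bar>Re (acoef A L c0 s n j \<mu>)\<bar> - \<kappa>)
               \<and> 1 / (\<bar>Re (acoef A L c0 s n j \<mu>)\<bar> - \<kappa>)
                   \<le> C / sqrt (1 + \<mu> * of_int n ^ 2 + real j + of_int \<bar>n\<bar>)
               \<and> 0 < 1 / (\<bar>Re (bcoef A L c0 s n j \<mu>)\<bar> - \<kappa>)
               \<and> 1 / (\<bar>Re (bcoef A L c0 s n j \<mu>)\<bar> - \<kappa>)
                   \<le> C / sqrt (1 + \<mu> * of_int n ^ 2 + real j + of_int \<bar>n\<bar>)"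
      using gen[OF Pa_ge Ra_def] gen[OF Pb_ge Rb_def] unfolding ReA ReB SS_def by blast
  qed
  have C0: "C \<ge> 0" unfolding C_def using k0 by simp
  show ?thesis
    apply (rule exI[of _ M])
    apply (intro conjI allI impI)
     apply (rule M0)
    apply (rule exI[of _ \<kappa>])
    apply (intro conjI)
      apply (rule \<kappa>0)
    subgoal for \<mu>max using P1 by (meson order_less_le_trans)
    subgoal for \<mu>max
      apply (rule exI[of _ C], rule exI[of _ NN], rule exI[of _ NN])
      using C0 NN1 P2 by auto
    done
qed

end
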